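(* Let $\mathcal{C}$ be a conjugacy class of $S_n$ whose elements have $c_j$ $j$-cycles for each $j$, let $2\leq d\leq n$, and let $k\geq1$ with $c_1\geq 2kd$. Let $\mathcal{C}'$ be the conjugacy class of $S_n$ whose elements have $c_1-kd$ fixed points, $c_d+k$ cycles of length $d$, and $c_j$ cycles of length $j$ for every other $j$. Then \[ \frac{|\mathcal{C}|}{|\mathcal{C}'|}\leq\frac{(c_d+k)^kd^k}{(kd)^{kd}}\leq\left(\frac{n}{(kd)^d}\right)^k. \] *)

theory Defs
  imports "HOL-Analysis.Analysis" "HOL-Combinatorics.Combinatorics"
begin

text \<open>The symmetric group S_n acts on {1..n}. The number of cycles of length j
  of a permutation p of {1..n} (fixed points count as 1-cycles) is the number of
  distinct orbits of size j.\<close>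
definition num_cycles :: "nat \<Rightarrow> (nat \<Rightarrow> nat) \<Rightarrow> nat \<Rightarrow> nat" where
  "num_cycles n p j = card {orbit p x | x. x \<in> {1..n} \<and> card (orbit p x) = j}"

definition conj_class :: "nat \<Rightarrow> (nat \<Rightarrow> nat) \<Rightarrow> (nat \<Rightarrow> nat) set" where
  "conj_class n p = {t \<circ> p \<circ> inv t | t. t permutes {1..n}}"

end

theory Submission
  imports Defs
begin

lemma orb_range: "permutation p \<Longrightarrow> orbit p x = range (\<lambda>m. (p ^^ m) x)"
  using orbit_altdef_permutation[of p x] by auto

lemma orb_self: "permutation p \<Longrightarrow> x \<in> orbit p x"
  by (rule permutation_self_in_orbit)

lemma orb_pow_eq: "permutation p \<Longrightarrow> orbit p ((p ^^ m) x) = orbit p x"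
proof (induction m)
  case (Suc m)
  then show ?case using permutation_orbit_step[of p "(p ^^ m) x"] by simp
qed simp

lemma orb_eq: "permutation p \<Longrightarrow> w \<in> orbit p x \<Longrightarrow> orbit p w = orbit p x"
  using orb_pow_eq orb_range by fastforce

lemma orb_card: "permutation p \<Longrightarrow> card (orbit p x) = least_power p x"
proof -
  assume p: "permutation p"
  have "set (support p x) = orbit p x" using support_set[OF p] orb_range[OF p] by simp
  moreover have "distinct (support p x)" using cycle_of_permutation[OF p] by simp
  ultimately show ?thesis using distinct_card by fastforce
qed

lemma orb_finite: "permutation p \<Longrightarrow> finite (orbit p x)"
  by (simp add: finite_orbit orb_self)

lemma orb_card_pos: "permutation p \<Longrightarrow> card (orbit p x) > 0"
  using orb_finite orb_self by (metis card_gt_0_iff empty_iff)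

lemma orb_pow_mod: "permutation p \<Longrightarrow> (p ^^ m) x = (p ^^ (m mod card (orbit p x))) x"
  using funpow_mod_eq least_power_of_permutation(1) orb_card by metis

lemma orb_pow_inj: "permutation p \<Longrightarrow> inj_on (\<lambda>m. (p ^^ m) x) {..<card (orbit p x)}"
proof -
  assume p: "permutation p"
  have "distinct (support p x)" using cycle_of_permutation[OF p] by simp
  then show ?thesis using orb_card[OF p] distinct_map by (metis atLeast_upt set_upt lessThan_atLeast0)
qed

lemma orb_pow_eq_iff: "permutation p \<Longrightarrow>
   (p ^^ m) x = (p ^^ m') x \<longleftrightarrow> m mod card (orbit p x) = m' mod card (orbit p x)"
proof -
  assume p: "permutation p"
  have pos: "card (orbit p x) > 0" using orb_card_pos[OF p] .
  show ?thesis
  proof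
    assume "(p ^^ m) x = (p ^^ m') x"
    then have "(p ^^ (m mod card (orbit p x))) x = (p ^^ (m' mod card (orbit p x))) x"
      using orb_pow_mod[OF p] by metis
    then show "m mod card (orbit p x) = m' mod card (orbit p x)"
      using inj_onD[OF orb_pow_inj[OF p]] pos by simp
  next
    assume "m mod card (orbit p x) = m' mod card (orbit p x)"
    then show "(p ^^ m) x = (p ^^ m') x" using orb_pow_mod[OF p] by metis
  qed
qed

lemma orb_invariant: "permutation p \<Longrightarrow> (\<And>x. x \<in> A \<Longrightarrow> p x \<in> A) \<Longrightarrow> x \<in> A \<Longrightarrow> orbit p x \<subseteq> A"
proof -
  assume p: "permutation p" and inv: "\<And>x. x \<in> A \<Longrightarrow> p x \<in> A" and x: "x \<in> A"
  have "(p ^^ m) x \<in> A" for m by (induction m) (auto simp: x inv)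
  then show ?thesis using orb_range[OF p] by auto
qed

definition Og :: "('a \<Rightarrow> 'a) \<Rightarrow> 'a set \<Rightarrow> nat \<Rightarrow> 'a set set" where
  "Og p A j = {orbit p x | x. x \<in> A \<and> card (orbit p x) = j}"

lemma Og_finite: "finite A \<Longrightarrow> finite (Og p A j)"
proof -
  assume "finite A"
  have "Og p A j \<subseteq> orbit p ` A" unfolding Og_def by auto
  then show ?thesis using \<open>finite A\<close> finite_subset by blast
qed

lemma orbit_map:
  assumes p: "permutation p" and q: "permutation q"
    and L: "card (orbit p x) = card (orbit q y)"
  defines "t0 \<equiv> \<lambda>z. (q ^^ funpow_dist p x z) y"
  shows "\<And>m. t0 ((p ^^ m) x) = (q ^^ m) y"
    and "bij_betw t0 (orbit p x) (orbit q y)"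
    and "\<And>z. z \<in> orbit p x \<Longrightarrow> t0 (p z) = q (t0 z)"
proof -
  show key: "t0 ((p ^^ m) x) = (q ^^ m) y" for m
  proof -
    have w: "(p ^^ m) x \<in> orbit p x" using orb_range[OF p] by auto
    have "(p ^^ funpow_dist p x ((p ^^ m) x)) x = (p ^^ m) x"
      using funpow_dist_prop[OF w] .
    then have "funpow_dist p x ((p ^^ m) x) mod card (orbit p x) = m mod card (orbit p x)"
      using orb_pow_eq_iff[OF p] by blast
    then show ?thesis unfolding t0_def using orb_pow_eq_iff[OF q] L by metis
  qed
  show "z \<in> orbit p x \<Longrightarrow> t0 (p z) = q (t0 z)" for z
  proof -
    assume "z \<in> orbit p x"
    then obtain m where m: "z = (p ^^ m) x" using orb_range[OF p] by auto
    have "t0 (p z) = t0 ((p ^^ Suc m) x)" using m by simp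
    also have "\<dots> = (q ^^ Suc m) y" by (rule key)
    also have "\<dots> = q (t0 z)" using key m by simp
    finally show ?thesis .
  qed
  show "bij_betw t0 (orbit p x) (orbit q y)"
    unfolding bij_betw_def
  proof
    show "inj_on t0 (orbit p x)"
    proof (rule inj_onI)
      fix z1 z2 assume "z1 \<in> orbit p x" "z2 \<in> orbit p x" "t0 z1 = t0 z2"
      then obtain m1 m2 where m: "z1 = (p ^^ m1) x" "z2 = (p ^^ m2) x" "t0 z1 = t0 z2"
        using orb_range[OF p] by auto
      then have "(q ^^ m1) y = (q ^^ m2) y" using key by metis
      then have "m1 mod card (orbit p x) = m2 mod card (orbit p x)"
        using orb_pow_eq_iff[OF q] L by metis
      then show "z1 = z2" using m orb_pow_eq_iff[OF p] by metis
    qed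
    show "t0 ` orbit p x = orbit q y"
    proof
      show "t0 ` orbit p x \<subseteq> orbit q y" using key orb_range[OF p] orb_range[OF q] by auto
      show "orbit q y \<subseteq> t0 ` orbit p x"
      proof
        fix w assume "w \<in> orbit q y"
        then obtain m where "w = (q ^^ m) y" using orb_range[OF q] by auto
        then have "w = t0 ((p ^^ m) x)" using key by simp
        then show "w \<in> t0 ` orbit p x" using orb_range[OF p] by auto
      qed
    qed
  qed
qed

lemma Og_remove:
  assumes p: "permutation p" and inv: "\<forall>z\<in>A. p z \<in> A" and x: "x \<in> A"
  shows "Og p (A - orbit p x) i = Og p A i - {orbit p x}"
    and "\<forall>z\<in>A - orbit p x. p z \<in> A - orbit p x"
proof -
  show "Og p (A - orbit p x) i = Og p A i - {orbit p x}"
  proof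
    show "Og p (A - orbit p x) i \<subseteq> Og p A i - {orbit p x}"
      unfolding Og_def using orb_self[OF p] by auto
    show "Og p A i - {orbit p x} \<subseteq> Og p (A - orbit p x) i"
      unfolding Og_def using orb_eq[OF p] by auto
  qed
  show "\<forall>z\<in>A - orbit p x. p z \<in> A - orbit p x"
  proof
    fix z assume z: "z \<in> A - orbit p x"
    have "p z \<notin> orbit p x"
    proof
      assume "p z \<in> orbit p x"
      then have "orbit p (p z) = orbit p x" using orb_eq[OF p] by blast
      then have "orbit p z = orbit p x" using permutation_orbit_step[OF p] by metis
      then show False using z orb_self[OF p, of z] by auto
    qed
    then show "p z \<in> A - orbit p x" using z inv by auto
  qed
qed

lemma card_Og_remove:
  assumes p: "permutation p" and inv: "\<forall>z\<in>A. p z \<in> A" and x: "x \<in> A" and A: "finite A"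
  shows "card (Og p (A - orbit p x) i) = card (Og p A i) - (if i = card (orbit p x) then 1 else 0)"
proof -
  have "orbit p x \<in> Og p A i \<longleftrightarrow> i = card (orbit p x)"
    unfolding Og_def using x by auto
  then show ?thesis using Og_remove(1)[OF p inv x] Og_finite[OF A]
    by (simp add: card_Diff_singleton_if)
qed

lemma classify:
  assumes "permutation p" "permutation q" "finite A" "finite B"
    "\<forall>x\<in>A. p x \<in> A" "\<forall>x\<in>B. q x \<in> B" "\<forall>j. card (Og p A j) = card (Og q B j)"
  shows "\<exists>t. bij_betw t A B \<and> (\<forall>x\<in>A. t (p x) = q (t x))"
  using assms
proof (induction "card A" arbitrary: A B rule: less_induct)
  case less
  note p = less.prems(1) and q = less.prems(2)
  show ?case
  proof (cases "A = {}")
    case True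
    have "B = {}"
    proof (rule ccontr)
      assume "B \<noteq> {}"
      then obtain y where y: "y \<in> B" by blast
      then have "orbit q y \<in> Og q B (card (orbit q y))" unfolding Og_def by auto
      then have "card (Og q B (card (orbit q y))) > 0" using Og_finite[OF less.prems(4)]
        by (metis card_gt_0_iff empty_iff)
      moreover have "Og p A j = {}" for j using True unfolding Og_def by auto
      ultimately show False using less.prems(7) by (metis card.empty less_irrefl)
    qed
    then show ?thesis using True by (intro exI[where x="\<lambda>_. undefined"]) (simp add: bij_betw_def)
  next
    case False
    then obtain x where x: "x \<in> A" by blast
    define j where "j = card (orbit p x)"
    have "orbit p x \<in> Og p A j" unfolding Og_def j_def using x by auto
    then have "card (Og p A j) > 0" using Og_finite[OF less.prems(3)]
      by (metis card_gt_0_iff empty_iff)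
    then have "Og q B j \<noteq> {}" using less.prems(7) by (metis card.empty less_irrefl)
    then obtain y where y: "y \<in> B" and yj: "card (orbit q y) = j" unfolding Og_def by auto
    define A' where "A' = A - orbit p x"
    define B' where "B' = B - orbit q y"
    have OA: "orbit p x \<subseteq> A" using orb_invariant[OF p, of A] less.prems(5) x by blast
    have OB: "orbit q y \<subseteq> B" using orb_invariant[OF q, of B] less.prems(6) y by blast
    have invA: "\<forall>z\<in>A'. p z \<in> A'" unfolding A'_def using Og_remove(2)[OF p less.prems(5) x] .
    have invB: "\<forall>z\<in>B'. q z \<in> B'" unfolding B'_def using Og_remove(2)[OF q less.prems(6) y] .
    have cnt: "\<forall>i. card (Og p A' i) = card (Og q B' i)"
      unfolding A'_def B'_def
      using card_Og_remove[OF p less.prems(5) x less.prems(3)]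
        card_Og_remove[OF q less.prems(6) y less.prems(4)] less.prems(7) yj j_def by simp
    have "A' \<subset> A" unfolding A'_def using x orb_self[OF p, of x] by blast
    then have lt: "card A' < card A" using less.prems(3) by (rule psubset_card_mono[rotated])
    obtain t' where t': "bij_betw t' A' B'" "\<forall>z\<in>A'. t' (p z) = q (t' z)"
      using less.hyps[OF lt p q _ _ invA invB cnt] less.prems(3,4) unfolding A'_def B'_def by auto
    define t0 where "t0 = (\<lambda>z. (q ^^ funpow_dist p x z) y)"
    have L: "card (orbit p x) = card (orbit q y)" using yj j_def by simp
    note om = orbit_map[OF p q L, folded t0_def]
    define t where "t = (\<lambda>z. if z \<in> orbit p x then t0 z else t' z)"
    have "bij_betw t (orbit p x \<union> A') (orbit q y \<union> B')"
      unfolding t_def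
      by (rule bij_betw_disjoint_Un[OF om(2) t'(1)]) (auto simp: A'_def B'_def)
    moreover have "orbit p x \<union> A' = A" "orbit q y \<union> B' = B" using OA OB A'_def B'_def by auto
    moreover have "\<forall>z\<in>A. t (p z) = q (t z)"
    proof
      fix z assume z: "z \<in> A"
      show "t (p z) = q (t z)"
      proof (cases "z \<in> orbit p x")
        case True
        then have "p z \<in> orbit p x" by (rule orbit.step)
        then show ?thesis using True om(3) t_def t0_def by simp
      next
        case False
        then have "z \<in> A'" using z A'_def by simp
        then have "p z \<in> A'" using invA by blast
        then show ?thesis using False \<open>z \<in> A'\<close> t'(2) t_def A'_def by simp
      qed
    qed
    ultimately show ?thesis by auto
  qed
qed

lemma num_cycles_Og: "num_cycles n p j = card (Og p {1..n} j)"
  unfolding num_cycles_def Og_def by simp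

lemma conj_pow: "bij t \<Longrightarrow> (t \<circ> p \<circ> inv t) ^^ m = t \<circ> (p ^^ m) \<circ> inv t"
proof (induction m)
  case 0
  then show ?case by (simp add: fun_eq_iff bij_is_surj surj_f_inv_f)
next
  case (Suc m)
  have "inj t" using Suc.prems bij_is_inj by blast
  then show ?case using Suc by (simp add: fun_eq_iff)
qed

lemma conj_permutes: "t permutes S \<Longrightarrow> p permutes S \<Longrightarrow> t \<circ> p \<circ> inv t permutes S"
  by (intro permutes_compose permutes_inv)

lemma conj_orbit:
  assumes t: "t permutes S" and p0: "p permutes S" and S: "finite S"
  shows "orbit (t \<circ> p \<circ> inv t) (t x) = t ` orbit p x"
proof -
  have bt: "bij t" using t permutes_bij by blast
  have pc: "permutation (t \<circ> p \<circ> inv t)"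
    using conj_permutes[OF t p0] S permutation_permutes by blast
  have p: "permutation p" using p0 S permutation_permutes by blast
  have "orbit (t \<circ> p \<circ> inv t) (t x) = range (\<lambda>m. ((t \<circ> p \<circ> inv t) ^^ m) (t x))"
    by (rule orb_range[OF pc])
  also have "\<dots> = range (\<lambda>m. t ((p ^^ m) x))"
    using conj_pow[OF bt] permutes_inverses(2)[OF t] by simp
  also have "\<dots> = t ` orbit p x" using orb_range[OF p] by auto
  finally show ?thesis .
qed

lemma conj_Og:
  assumes t: "t permutes S" and p: "p permutes S" and S: "finite S"
  shows "Og (t \<circ> p \<circ> inv t) S j = (\<lambda>X. t ` X) ` Og p S j"
proof -
  have it: "inj t" using t permutes_inj by blast
  have cardi: "card (t ` X) = card X" for X using it by (simp add: card_image inj_on_subset)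
  show ?thesis
  proof
    show "Og (t \<circ> p \<circ> inv t) S j \<subseteq> (\<lambda>X. t ` X) ` Og p S j"
    proof
      fix X assume "X \<in> Og (t \<circ> p \<circ> inv t) S j"
      then obtain z where z: "z \<in> S" "X = orbit (t \<circ> p \<circ> inv t) z" "card X = j"
        unfolding Og_def by auto
      define x where "x = inv t z"
      have x1: "x \<in> S" using permutes_in_image[OF permutes_inv[OF t]] z(1) x_def by simp
      have x2: "t x = z" using permutes_inverses(1)[OF t] x_def by simp
      have X: "X = t ` orbit p x" using z(2) x2 conj_orbit[OF t p S, of x] by simp
      then have "card (orbit p x) = j" using z(3) cardi by simp
      then have "orbit p x \<in> Og p S j" unfolding Og_def using x1 by blast
      then show "X \<in> (\<lambda>X. t ` X) ` Og p S j" using X by blast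
    qed
    show "(\<lambda>X. t ` X) ` Og p S j \<subseteq> Og (t \<circ> p \<circ> inv t) S j"
    proof
      fix X assume "X \<in> (\<lambda>X. t ` X) ` Og p S j"
      then obtain x where x: "x \<in> S" "X = t ` orbit p x" "card (orbit p x) = j"
        unfolding Og_def by blast
      have X: "X = orbit (t \<circ> p \<circ> inv t) (t x)" using x(2) conj_orbit[OF t p S, of x] by simp
      have tx: "t x \<in> S" using x(1) permutes_in_image[OF t] by simp
      have "card X = j" using x(2,3) cardi by simp
      then show "X \<in> Og (t \<circ> p \<circ> inv t) S j" unfolding Og_def using X tx by blast
    qed
  qed
qed

lemma conj_Og_card:
  assumes t: "t permutes S" and p: "p permutes S" and S: "finite S"
  shows "card (Og (t \<circ> p \<circ> inv t) S j) = card (Og p S j)"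
proof -
  have it: "inj t" using t permutes_inj by blast
  have "inj (\<lambda>X. t ` X)"
  proof (rule injI)
    fix X Y assume "t ` X = t ` Y" then show "X = Y" using inj_image_eq_iff[OF it] by blast
  qed
  then show ?thesis using conj_Og[OF assms] by (simp add: card_image inj_on_subset)
qed

lemma conj_class_char:
  assumes p: "p permutes {1..n}"
  shows "conj_class n p = {q. q permutes {1..n} \<and> (\<forall>j. num_cycles n q j = num_cycles n p j)}"
proof
  show "conj_class n p \<subseteq> {q. q permutes {1..n} \<and> (\<forall>j. num_cycles n q j = num_cycles n p j)}"
  proof
    fix q assume "q \<in> conj_class n p"
    then obtain t where t: "t permutes {1..n}" "q = t \<circ> p \<circ> inv t" unfolding conj_class_def by blast
    show "q \<in> {q. q permutes {1..n} \<and> (\<forall>j. num_cycles n q j = num_cycles n p j)}"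
      using conj_Og_card[OF t(1) p] conj_permutes[OF t(1) p] t(2) unfolding num_cycles_Og by simp
  qed
  show "{q. q permutes {1..n} \<and> (\<forall>j. num_cycles n q j = num_cycles n p j)} \<subseteq> conj_class n p"
  proof
    fix q assume "q \<in> {q. q permutes {1..n} \<and> (\<forall>j. num_cycles n q j = num_cycles n p j)}"
    then have q: "q permutes {1..n}" and c: "\<forall>j. card (Og p {1..n} j) = card (Og q {1..n} j)"
      unfolding num_cycles_Og by auto
    let ?S = "{1..n::nat}"
    have pp: "permutation p" using p permutation_permutes by blast
    have qq: "permutation q" using q permutation_permutes by blast
    have "\<exists>t. bij_betw t ?S ?S \<and> (\<forall>x\<in>?S. t (p x) = q (t x))"
    proof (rule classify[OF pp qq _ _ _ _ c])
      show "\<forall>x\<in>?S. p x \<in> ?S" using permutes_in_image[OF p] by blast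
      show "\<forall>x\<in>?S. q x \<in> ?S" using permutes_in_image[OF q] by blast
    qed simp_all
    then obtain t where t: "bij_betw t ?S ?S" "\<forall>x\<in>?S. t (p x) = q (t x)" by blast
    define t' where "t' = (\<lambda>z. if z \<in> ?S then t z else z)"
    have "bij_betw t' ?S ?S = bij_betw t ?S ?S" by (rule bij_betw_cong) (simp add: t'_def)
    then have "bij_betw t' ?S ?S" using t(1) by simp
    then have t'p: "t' permutes ?S" by (rule bij_imp_permutes) (auto simp: t'_def)
    have "q = t' \<circ> p \<circ> inv t'"
    proof
      fix z
      show "q z = (t' \<circ> p \<circ> inv t') z"
      proof (cases "z \<in> ?S")
        case True
        define w where "w = inv t' z"
        have w1: "w \<in> ?S" using permutes_in_image[OF permutes_inv[OF t'p]] True w_def by simp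
        have w2: "t' w = z" using permutes_inverses(1)[OF t'p] w_def by simp
        note w = w1 w2
        have pw: "p w \<in> ?S" using w(1) permutes_in_image[OF p] by blast
        have "(t' \<circ> p \<circ> inv t') z = t' (p w)" using w_def by simp
        also have "\<dots> = t (p w)" using pw unfolding t'_def by (simp only: if_True)
        also have "\<dots> = q (t w)" using t(2) w(1) by blast
        also have "\<dots> = q (t' w)" using w(1) unfolding t'_def by (simp only: if_True)
        also have "\<dots> = q z" using w(2) by simp
        finally show ?thesis by simp
      next
        case False
        have "inv t' z = z" using permutes_not_in[OF permutes_inv[OF t'p] False] .
        moreover have "p z = z" using permutes_not_in[OF p False] .
        moreover have "q z = z" using permutes_not_in[OF q False] .
        ultimately show ?thesis using False t'_def by auto
      qed
    qed
    then show "q \<in> conj_class n p" unfolding conj_class_def using t'p by blast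
  qed
qed

lemma idx_lt: "(q::nat) < k \<Longrightarrow> r < d \<Longrightarrow> d * q + r < k * d"
proof -
  assume "q < k" "r < d"
  then have "d * q + r < d * q + d" by simp
  also have "\<dots> = d * Suc q" by simp
  also have "\<dots> \<le> d * k" using \<open>q < k\<close> by (intro mult_le_mono2) simp
  finally show ?thesis by (simp add: mult.commute)
qed

lemma idx_div: "(r::nat) < d \<Longrightarrow> (d * q + r) div d = q"
  by simp

lemma idx_mod: "(r::nat) < d \<Longrightarrow> (d * q + r) mod d = r"
  by simp

lemma div_lt: "(i::nat) < k * d \<Longrightarrow> i div d < k"
  by (simp add: less_mult_imp_div_less)

lemma idx_decomp: "0 < (d::nat) \<Longrightarrow> d * (i div d) + i mod d = i"
  by simp

definition nxt :: "nat \<Rightarrow> nat \<Rightarrow> nat" where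
  "nxt d i = d * (i div d) + Suc (i mod d) mod d"

definition rho :: "nat \<Rightarrow> nat list \<Rightarrow> nat \<Rightarrow> nat" where
  "rho d xs z = (if z \<in> set xs then xs ! nxt d (the_inv_into {..<length xs} ((!) xs) z) else z)"

lemma OgI: "x \<in> A \<Longrightarrow> card (orbit p x) = j \<Longrightarrow> orbit p x \<in> Og p A j"
  unfolding Og_def by blast

lemma perm_fix_orbit: "permutation p \<Longrightarrow> card (orbit p z) = 1 \<longleftrightarrow> p z = z"
proof
  assume p: "permutation p" and c: "card (orbit p z) = 1"
  obtain a where "orbit p z = {a}" using c by (rule card_1_singletonE)
  then have "orbit p z = {z}" using orb_self[OF p, of z] by auto
  then show "p z = z" using orbit_eq_singleton_iff by metis
next
  assume "p z = z" then show "card (orbit p z) = 1" using orbit_eq_singleton_iff[of p z] by simp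
qed

lemma suc_mod_eq: "(a::nat) < d \<Longrightarrow> Suc a mod d = (if Suc a = d then 0 else Suc a)"
  by (cases "Suc a = d") (simp_all add: Suc_lessI)
lemma suc_mod_inj: "(a::nat) < d \<Longrightarrow> b < d \<Longrightarrow> Suc a mod d = Suc b mod d \<Longrightarrow> a = b"
  using suc_mod_eq[of a d] suc_mod_eq[of b d] by (auto split: if_splits)

lemma Og_one: "permutation p \<Longrightarrow> Og p S 1 = (\<lambda>z. {z}) ` {z\<in>S. p z = z}"
proof -
  assume p: "permutation p"
  show ?thesis
  proof
    show "Og p S 1 \<subseteq> (\<lambda>z. {z}) ` {z\<in>S. p z = z}"
    proof
      fix X assume "X \<in> Og p S 1"
      then obtain z where z: "z \<in> S" "X = orbit p z" "card (orbit p z) = 1" unfolding Og_def by blast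
      then have "p z = z" using perm_fix_orbit[OF p] by blast
      then have "X = {z}" using z(2) orbit_eq_singleton_iff by metis
      then show "X \<in> (\<lambda>z. {z}) ` {z\<in>S. p z = z}" using z(1) \<open>p z = z\<close> by blast
    qed
    show "(\<lambda>z. {z}) ` {z\<in>S. p z = z} \<subseteq> Og p S 1"
    proof
      fix X assume "X \<in> (\<lambda>z. {z}) ` {z\<in>S. p z = z}"
      then obtain z where z: "z \<in> S" "p z = z" "X = {z}" by blast
      then have "X = orbit p z" "card (orbit p z) = 1" using orbit_eq_singleton_iff[of p z] by simp_all
      then show "X \<in> Og p S 1" unfolding Og_def using z(1) by blast
    qed
  qed
qed

lemma card_Og_one: "permutation p \<Longrightarrow> finite S \<Longrightarrow> card (Og p S 1) = card {z\<in>S. p z = z}"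
proof -
  assume p: "permutation p" and S: "finite S"
  have "inj_on (\<lambda>z. {z}) {z\<in>S. p z = z}" by (auto intro: inj_onI)
  then show ?thesis using Og_one[OF p, of S] by (simp add: card_image)
qed

locale blkset =
  fixes n d k :: nat and s :: "nat \<Rightarrow> nat" and xs :: "nat list"
  assumes d2: "2 \<le> d" and s: "s permutes {1..n}" and len: "length xs = k * d"
    and dist: "distinct xs" and fx: "set xs \<subseteq> {z \<in> {1..n}. s z = z}"
begin

definition tau where "tau = s \<circ> rho d xs"
definition blk where "blk b = (\<lambda>r. xs ! (d * b + r)) ` {..<d}"

lemma dpos: "0 < d" using d2 by simp

lemma nxt_props: "i < k * d \<Longrightarrow> nxt d i < k * d \<and> nxt d i div d = i div d \<and> nxt d i mod d = Suc (i mod d) mod d"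
proof -
  assume i: "i < k * d"
  have r: "Suc (i mod d) mod d < d" using dpos by simp
  show ?thesis unfolding nxt_def using idx_lt[OF div_lt[OF i] r] idx_div[OF r] idx_mod[OF r] by simp
qed

lemma inj_nth: "inj_on ((!) xs) {..<length xs}"
  using dist by (simp add: inj_on_nth)

lemma rho_nth: "i < k * d \<Longrightarrow> rho d xs (xs ! i) = xs ! nxt d i"
proof -
  assume i: "i < k * d"
  then have "xs ! i \<in> set xs" using len by simp
  moreover have "the_inv_into {..<length xs} ((!) xs) (xs ! i) = i"
    using the_inv_into_f_f[OF inj_nth] i len by simp
  ultimately show ?thesis unfolding rho_def by simp
qed

lemma in_set_xs: "z \<in> set xs \<Longrightarrow> \<exists>i < k * d. z = xs ! i"
  using len by (metis in_set_conv_nth)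

lemma sfix: "z \<in> set xs \<Longrightarrow> s z = z" using fx by auto
lemma xsS: "z \<in> set xs \<Longrightarrow> z \<in> {1..n}" using fx by auto

lemma nxt_inj: "i < k * d \<Longrightarrow> j < k * d \<Longrightarrow> nxt d i = nxt d j \<Longrightarrow> i = j"
proof -
  assume i: "i < k * d" and j: "j < k * d" and e: "nxt d i = nxt d j"
  have "i div d = j div d" using nxt_props[OF i] nxt_props[OF j] e by metis
  moreover have "Suc (i mod d) mod d = Suc (j mod d) mod d" using nxt_props[OF i] nxt_props[OF j] e by metis
  then have "i mod d = j mod d" using suc_mod_inj[of "i mod d" d "j mod d"] dpos by simp
  ultimately show "i = j" by (metis div_mult_mod_eq)
qed

lemma rho_permutes: "rho d xs permutes set xs"
proof (rule bij_imp_permutes)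
  have img: "rho d xs ` set xs \<subseteq> set xs"
  proof
    fix w assume "w \<in> rho d xs ` set xs"
    then obtain z where z: "z \<in> set xs" "w = rho d xs z" by blast
    then obtain i where i: "i < k * d" "z = xs ! i" using in_set_xs by blast
    then show "w \<in> set xs" using z rho_nth nxt_props len by simp
  qed
  have inj: "inj_on (rho d xs) (set xs)"
  proof (rule inj_onI)
    fix z1 z2 assume "z1 \<in> set xs" "z2 \<in> set xs" and e: "rho d xs z1 = rho d xs z2"
    then obtain i j where ij: "i < k * d" "z1 = xs ! i" "j < k * d" "z2 = xs ! j" using in_set_xs by blast
    then have "xs ! nxt d i = xs ! nxt d j" using e rho_nth by simp
    then have "nxt d i = nxt d j" using inj_onD[OF inj_nth] nxt_props ij len by simp
    then show "z1 = z2" using nxt_inj[OF ij(1) ij(3)] ij(2,4) by simp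
  qed
  show "bij_betw (rho d xs) (set xs) (set xs)"
    unfolding bij_betw_def using inj img endo_inj_surj[OF finite_set img inj] by simp
  show "\<And>x. x \<notin> set xs \<Longrightarrow> rho d xs x = x" unfolding rho_def by simp
qed

lemma tau_permutes: "tau permutes {1..n}"
  unfolding tau_def
  by (rule permutes_compose[OF permutes_subset[OF rho_permutes] s]) (use fx in auto)

lemma tau_perm: "permutation tau" using tau_permutes permutation_permutes by blast
lemma s_perm: "permutation s" using s permutation_permutes by blast

lemma tau_nth: "i < k * d \<Longrightarrow> tau (xs ! i) = xs ! nxt d i"
  unfolding tau_def using rho_nth sfix nxt_props len by simp

lemma tau_pow_nth: "i < k * d \<Longrightarrow> (tau ^^ m) (xs ! i) = xs ! (d * (i div d) + (i mod d + m) mod d)"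
proof (induction m)
  case 0
  then show ?case by simp
next
  case (Suc m)
  define j where "j = d * (i div d) + (i mod d + m) mod d"
  have r: "(i mod d + m) mod d < d" using dpos by simp
  have j: "j < k * d" "j div d = i div d" "j mod d = (i mod d + m) mod d"
    unfolding j_def using idx_lt[OF div_lt[OF Suc.prems] r] idx_div[OF r] idx_mod[OF r] by simp_all
  have "(tau ^^ Suc m) (xs ! i) = tau ((tau ^^ m) (xs ! i))" by simp
  also have "\<dots> = tau (xs ! j)" using Suc.IH Suc.prems j_def by simp
  also have "\<dots> = xs ! nxt d j" using tau_nth[OF j(1)] .
  also have "nxt d j = d * (i div d) + Suc ((i mod d + m) mod d) mod d"
    unfolding nxt_def j(2) j(3) by (rule refl)
  also have "Suc ((i mod d + m) mod d) mod d = (i mod d + Suc m) mod d"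
    by (metis add_Suc_right mod_Suc_eq)
  finally show ?case .
qed

lemma tau_orbit_nth: "i < k * d \<Longrightarrow> orbit tau (xs ! i) = blk (i div d)"
proof -
  assume i: "i < k * d"
  have "orbit tau (xs ! i) = range (\<lambda>m. (tau ^^ m) (xs ! i))" using orb_range[OF tau_perm] .
  also have "\<dots> = range (\<lambda>m. xs ! (d * (i div d) + (i mod d + m) mod d))"
    using tau_pow_nth[OF i] by presburger
  also have "\<dots> = blk (i div d)"
  proof
    show "range (\<lambda>m. xs ! (d * (i div d) + (i mod d + m) mod d)) \<subseteq> blk (i div d)"
    proof
      fix w assume "w \<in> range (\<lambda>m. xs ! (d * (i div d) + (i mod d + m) mod d))"
      then obtain m where m: "w = xs ! (d * (i div d) + (i mod d + m) mod d)" by blast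
      have "(i mod d + m) mod d \<in> {..<d}" using dpos by simp
      then show "w \<in> blk (i div d)" unfolding blk_def using m by blast
    qed
    show "blk (i div d) \<subseteq> range (\<lambda>m. xs ! (d * (i div d) + (i mod d + m) mod d))"
    proof
      fix w assume "w \<in> blk (i div d)"
      then obtain r where r: "r < d" "w = xs ! (d * (i div d) + r)" unfolding blk_def by blast
      have "i mod d < d" using dpos by simp
      then have "i mod d + (d - i mod d + r) = d + r" by simp
      then have "(i mod d + (d - i mod d + r)) mod d = r" using r(1) by simp
      then have "w = xs ! (d * (i div d) + (i mod d + (d - i mod d + r)) mod d)" using r(2) by simp
      then show "w \<in> range (\<lambda>m. xs ! (d * (i div d) + (i mod d + m) mod d))" by blast
    qed
  qed
  finally show ?thesis .
qed

lemma blk_card: "b < k \<Longrightarrow> card (blk b) = d"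
proof -
  assume b: "b < k"
  have "inj_on (\<lambda>r. xs ! (d * b + r)) {..<d}"
  proof (rule inj_onI)
    fix r1 r2 assume r: "r1 \<in> {..<d}" "r2 \<in> {..<d}" and e: "xs ! (d * b + r1) = xs ! (d * b + r2)"
    have "d * b + r1 \<in> {..<length xs}" "d * b + r2 \<in> {..<length xs}"
      using idx_lt[OF b] r len by auto
    then have "d * b + r1 = d * b + r2" using inj_onD[OF inj_nth e] by blast
    then show "r1 = r2" by simp
  qed
  then show ?thesis unfolding blk_def by (simp add: card_image)
qed

lemma blk_sub: "b < k \<Longrightarrow> blk b \<subseteq> set xs"
proof
  fix w assume b: "b < k" and "w \<in> blk b"
  then obtain r where r: "r < d" "w = xs ! (d * b + r)" unfolding blk_def by blast
  have "d * b + r < length xs" using idx_lt[OF b r(1)] len by simp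
  then show "w \<in> set xs" using r(2) nth_mem by blast
qed

lemma blk_ne: "b < k \<Longrightarrow> xs ! (d * b) \<in> blk b"
proof -
  have "xs ! (d * b) = (\<lambda>r. xs ! (d * b + r)) 0" by simp
  moreover have "(0::nat) \<in> {..<d}" using dpos by simp
  ultimately show ?thesis unfolding blk_def by blast
qed

lemma orbit_nth_card: "i < k * d \<Longrightarrow> card (orbit tau (xs ! i)) = d"
  using tau_orbit_nth blk_card div_lt by simp

lemma outside_step: "w \<notin> set xs \<Longrightarrow> s w \<notin> set xs"
proof
  assume w: "w \<notin> set xs" and sw: "s w \<in> set xs"
  then have "s (s w) = s w" using sfix by blast
  then have "s w = w" using injD[OF permutes_inj[OF s]] by blast
  then show False using w sw by simp
qed

lemma tau_out: "w \<notin> set xs \<Longrightarrow> tau w = s w"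
  unfolding tau_def rho_def by simp

lemma tau_outside: "z \<notin> set xs \<Longrightarrow> orbit tau z = orbit s z"
proof -
  assume z: "z \<notin> set xs"
  have "(tau ^^ m) z = (s ^^ m) z \<and> (s ^^ m) z \<notin> set xs" for m
  proof (induction m)
    case 0 then show ?case using z by simp
  next
    case (Suc m)
    then have "(tau ^^ Suc m) z = s ((s ^^ m) z)" using tau_out by simp
    then show ?case using outside_step Suc by simp
  qed
  then have "range (\<lambda>m. (tau ^^ m) z) = range (\<lambda>m. (s ^^ m) z)" by presburger
  then show ?thesis using orb_range[OF tau_perm] orb_range[OF s_perm] by simp
qed

lemma orbit_s_xs: "z \<in> set xs \<Longrightarrow> orbit s z = {z}"
  using sfix orbit_eq_singleton_iff by metis

lemma xs_orbit: "z \<in> set xs \<Longrightarrow> card (orbit tau z) = d"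
  using in_set_xs orbit_nth_card by blast

lemma Og_other: "j \<noteq> 1 \<Longrightarrow> j \<noteq> d \<Longrightarrow> Og tau {1..n} j = Og s {1..n} j"
proof
  assume j: "j \<noteq> 1" "j \<noteq> d"
  show "Og tau {1..n} j \<subseteq> Og s {1..n} j"
  proof
    fix X assume "X \<in> Og tau {1..n} j"
    then obtain z where z: "z \<in> {1..n}" "X = orbit tau z" "card X = j" unfolding Og_def by blast
    then have "z \<notin> set xs" using xs_orbit j by blast
    then have "X = orbit s z" using z tau_outside by simp
    then show "X \<in> Og s {1..n} j" unfolding Og_def using z by blast
  qed
  show "Og s {1..n} j \<subseteq> Og tau {1..n} j"
  proof
    fix X assume "X \<in> Og s {1..n} j"
    then obtain z where z: "z \<in> {1..n}" "X = orbit s z" "card X = j" unfolding Og_def by blast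
    have "z \<notin> set xs"
    proof
      assume "z \<in> set xs" then have "X = {z}" using z(2) orbit_s_xs by simp
      then show False using z(3) j by simp
    qed
    then have "X = orbit tau z" using z tau_outside by simp
    then show "X \<in> Og tau {1..n} j" unfolding Og_def using z by blast
  qed
qed

lemma Og_1: "Og tau {1..n} 1 = Og s {1..n} 1 - (\<lambda>z. {z}) ` set xs"
proof
  show "Og tau {1..n} 1 \<subseteq> Og s {1..n} 1 - (\<lambda>z. {z}) ` set xs"
  proof
    fix X assume "X \<in> Og tau {1..n} 1"
    then obtain z where z: "z \<in> {1..n}" "X = orbit tau z" "card X = 1" unfolding Og_def by blast
    have zn: "z \<notin> set xs"
    proof
      assume "z \<in> set xs" then have "card X = d" using xs_orbit z(2) by simp
      then show False using z(3) d2 by simp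
    qed
    then have Xs: "X = orbit s z" using z tau_outside by simp
    have "tau z = z" using z perm_fix_orbit[OF tau_perm] by simp
    then have "X = {z}" using z(2) orbit_eq_singleton_iff by metis
    have "X \<notin> (\<lambda>z. {z}) ` set xs"
    proof
      assume "X \<in> (\<lambda>z. {z}) ` set xs"
      then obtain w where w: "w \<in> set xs" "X = {w}" by blast
      then have "z = w" using \<open>X = {z}\<close> by simp
      then show False using zn w(1) by simp
    qed
    moreover have "X \<in> Og s {1..n} 1" unfolding Xs by (rule OgI[OF z(1)]) (use z(3) Xs in simp)
    ultimately show "X \<in> Og s {1..n} 1 - (\<lambda>z. {z}) ` set xs" by (rule DiffI[rotated])
  qed
  show "Og s {1..n} 1 - (\<lambda>z. {z}) ` set xs \<subseteq> Og tau {1..n} 1"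
  proof
    fix X assume X: "X \<in> Og s {1..n} 1 - (\<lambda>z. {z}) ` set xs"
    then obtain z where z: "z \<in> {1..n}" "X = orbit s z" "card X = 1" unfolding Og_def by blast
    have "s z = z" using z perm_fix_orbit[OF s_perm] by simp
    then have "X = {z}" using z(2) orbit_eq_singleton_iff by metis
    have "z \<notin> set xs"
    proof
      assume "z \<in> set xs"
      then have "X \<in> (\<lambda>z. {z}) ` set xs" using \<open>X = {z}\<close> by simp
      then show False using X by simp
    qed
    then have "X = orbit tau z" using z tau_outside by simp
    then show "X \<in> Og tau {1..n} 1" unfolding Og_def using z by blast
  qed
qed

lemma card_Og_1: "card (Og tau {1..n} 1) = card (Og s {1..n} 1) - k * d"
proof -
  have sub: "(\<lambda>z. {z}) ` set xs \<subseteq> Og s {1..n} 1"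
  proof
    fix X assume "X \<in> (\<lambda>z. {z}) ` set xs"
    then obtain w where w: "w \<in> set xs" "X = {w}" by blast
    then have "X = orbit s w" using orbit_s_xs by simp
    moreover have "card X = 1" using w(2) by simp
    moreover have "w \<in> {1..n}" using xsS w(1) by blast
    ultimately show "X \<in> Og s {1..n} 1" unfolding Og_def by blast
  qed
  have "inj_on (\<lambda>z. {z}) (set xs)" by (auto intro: inj_onI)
  then have "card ((\<lambda>z. {z}) ` set xs) = card (set xs)" by (rule card_image)
  also have "\<dots> = k * d" using distinct_card[OF dist] len by simp
  finally have ck: "card ((\<lambda>z. {z}) ` set xs) = k * d" .
  have "finite ((\<lambda>z. {z}) ` set xs)" by simp
  then show ?thesis using Og_1 card_Diff_subset[OF _ sub] ck by simp
qed

lemma blk_orbit: "b < k \<Longrightarrow> blk b = orbit tau (xs ! (d * b))"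
proof -
  assume b: "b < k"
  have "d * b < k * d" using idx_lt[OF b, of 0] dpos by simp
  then show ?thesis using tau_orbit_nth dpos by simp
qed

lemma blk_inj: "inj_on blk {..<k}"
proof (rule inj_onI)
  fix b b' assume b: "b \<in> {..<k}" "b' \<in> {..<k}" and e: "blk b = blk b'"
  have "xs ! (d * b) \<in> blk b" using blk_ne b(1) by simp
  then have "xs ! (d * b) \<in> blk b'" using e by simp
  then obtain r where r: "r < d" "xs ! (d * b) = xs ! (d * b' + r)" unfolding blk_def by blast
  have "d * b \<in> {..<length xs}" "d * b' + r \<in> {..<length xs}"
    using idx_lt[of b k 0 d] idx_lt[of b' k r d] b r(1) dpos len by auto
  then have "d * b = d * b' + r" using inj_onD[OF inj_nth r(2)] by blast
  then have "(d * b) div d = (d * b' + r) div d" by simp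
  then show "b = b'" using r(1) dpos by simp
qed

lemma Og_d: "Og tau {1..n} d = Og s {1..n} d \<union> blk ` {..<k}"
proof
  show "Og tau {1..n} d \<subseteq> Og s {1..n} d \<union> blk ` {..<k}"
  proof
    fix X assume "X \<in> Og tau {1..n} d"
    then obtain z where z: "z \<in> {1..n}" "X = orbit tau z" "card X = d" unfolding Og_def by blast
    show "X \<in> Og s {1..n} d \<union> blk ` {..<k}"
    proof (cases "z \<in> set xs")
      case True
      then obtain i where i: "i < k * d" "z = xs ! i" using in_set_xs by blast
      then have "X = blk (i div d)" using z tau_orbit_nth by simp
      then show ?thesis using div_lt[OF i(1)] by blast
    next
      case False
      then have "X = orbit s z" using z tau_outside by simp
      then show ?thesis unfolding Og_def using z by blast
    qed
  qed
  show "Og s {1..n} d \<union> blk ` {..<k} \<subseteq> Og tau {1..n} d"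
  proof
    fix X assume "X \<in> Og s {1..n} d \<union> blk ` {..<k}"
    then show "X \<in> Og tau {1..n} d"
    proof
      assume "X \<in> Og s {1..n} d"
      then obtain z where z: "z \<in> {1..n}" "X = orbit s z" "card X = d" unfolding Og_def by blast
      have "z \<notin> set xs"
      proof
        assume "z \<in> set xs" then have "X = {z}" using z(2) orbit_s_xs by simp
        then show False using z(3) d2 by simp
      qed
      then have "X = orbit tau z" using z tau_outside by simp
      then show "X \<in> Og tau {1..n} d" unfolding Og_def using z by blast
    next
      assume "X \<in> blk ` {..<k}"
      then obtain b where b: "b < k" "X = blk b" by blast
      have "d * b < length xs" using idx_lt[of b k 0 d] b dpos len by simp
      then have "xs ! (d * b) \<in> {1..n}" using xsS nth_mem by blast
      moreover have "X = orbit tau (xs ! (d * b))" using blk_orbit b by simp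
      moreover have "card X = d" using blk_card b by simp
      ultimately show "X \<in> Og tau {1..n} d" unfolding Og_def by blast
    qed
  qed
qed

lemma card_Og_d: "card (Og tau {1..n} d) = card (Og s {1..n} d) + k"
proof -
  have disj: "Og s {1..n} d \<inter> blk ` {..<k} = {}"
  proof (rule ccontr)
    assume "Og s {1..n} d \<inter> blk ` {..<k} \<noteq> {}"
    then obtain z b where z: "z \<in> {1..n}" "card (orbit s z) = d" "b < k" "orbit s z = blk b"
      unfolding Og_def by blast
    have "xs ! (d * b) \<in> orbit s z" using blk_ne z by simp
    then have "orbit s (xs ! (d * b)) = orbit s z" using orb_eq[OF s_perm] by blast
    moreover have "xs ! (d * b) \<in> set xs" using blk_sub blk_ne z(3) by blast
    ultimately have "orbit s z = {xs ! (d * b)}" using orbit_s_xs by simp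
    then show False using z(2) d2 by simp
  qed
  have "card (blk ` {..<k}) = k" using blk_inj by (simp add: card_image)
  then show ?thesis using Og_d card_Un_disjoint[OF Og_finite _ disj] by simp
qed

end

lemma Og_zero: "permutation p \<Longrightarrow> Og p A 0 = {}"
proof -
  assume p: "permutation p"
  have "\<forall>x. card (orbit p x) \<noteq> 0" using orb_card_pos[OF p] by simp
  then show ?thesis unfolding Og_def by blast
qed

lemma U_card:
  assumes p: "p permutes S" and S: "finite S"
  shows "card {z\<in>S. card (orbit p z) = j} = j * card (Og p S j)"
proof -
  have pp: "permutation p" using p S permutation_permutes by blast
  have U: "\<Union> (Og p S j) = {z\<in>S. card (orbit p z) = j}"
  proof
    show "\<Union> (Og p S j) \<subseteq> {z\<in>S. card (orbit p z) = j}"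
    proof
      fix w assume "w \<in> \<Union> (Og p S j)"
      then obtain X where X: "X \<in> Og p S j" "w \<in> X" by blast
      obtain x where x0: "x \<in> S" "card (orbit p x) = j" "X = orbit p x" using X(1) unfolding Og_def by blast
      then have x: "x \<in> S" "card (orbit p x) = j" "w \<in> orbit p x" using X(2) by simp_all
      have "w \<in> S" using permutes_orbit_subset[OF p x(1)] x(3) by blast
      moreover have "orbit p w = orbit p x" using orb_eq[OF pp x(3)] .
      ultimately show "w \<in> {z\<in>S. card (orbit p z) = j}" using x(2) by simp
    qed
    show "{z\<in>S. card (orbit p z) = j} \<subseteq> \<Union> (Og p S j)"
    proof
      fix z assume "z \<in> {z\<in>S. card (orbit p z) = j}"
      then have "orbit p z \<in> Og p S j" using OgI[of z S p j] by simp
      then show "z \<in> \<Union> (Og p S j)" using orb_self[OF pp, of z] by blast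
    qed
  qed
  have disj: "pairwise disjnt (Og p S j)"
  proof (rule pairwiseI)
    fix X Y assume X: "X \<in> Og p S j" and Y: "Y \<in> Og p S j" and ne: "X \<noteq> Y"
    obtain x where x: "X = orbit p x" using X unfolding Og_def by blast
    obtain y where y: "Y = orbit p y" using Y unfolding Og_def by blast
    show "disjnt X Y"
    proof (rule ccontr)
      assume "\<not> disjnt X Y"
      then obtain w where "w \<in> X" "w \<in> Y" unfolding disjnt_def by blast
      then have "w \<in> orbit p x" "w \<in> orbit p y" using x y by simp_all
      then have "orbit p x = orbit p y" using orb_eq[OF pp] by metis
      then show False using ne x y by simp
    qed
  qed
  have "card (\<Union> (Og p S j)) = sum card (Og p S j)"
    by (rule card_Union_disjoint[OF disj]) (auto simp: Og_def orb_finite[OF pp])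
  also have "\<dots> = sum (\<lambda>_. j) (Og p S j)"
    by (rule sum.cong) (auto simp: Og_def)
  also have "\<dots> = j * card (Og p S j)" by simp
  finally show ?thesis using U by simp
qed

theorem lemma5p6:
  fixes n d k :: nat and \<sigma> \<sigma>' :: "nat \<Rightarrow> nat" and c :: "nat \<Rightarrow> nat"
  assumes "\<sigma> permutes {1..n}" and "\<sigma>' permutes {1..n}"
    and "\<And>j. j \<ge> 1 \<Longrightarrow> num_cycles n \<sigma> j = c j"
    and "2 \<le> d" and "d \<le> n" and "k \<ge> 1" and "c 1 \<ge> 2 * k * d"
    and "num_cycles n \<sigma>' 1 = c 1 - k * d"
    and "num_cycles n \<sigma>' d = c d + k"
    and "\<And>j. j \<ge> 1 \<Longrightarrow> j \<noteq> 1 \<Longrightarrow> j \<noteq> d \<Longrightarrow> num_cycles n \<sigma>' j = c j"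
  shows "real (card (conj_class n \<sigma>)) / real (card (conj_class n \<sigma>'))
           \<le> real (c d + k) ^ k * real d ^ k / real (k * d) ^ (k * d)
         \<and> real (c d + k) ^ k * real d ^ k / real (k * d) ^ (k * d)
           \<le> (real n / real (k * d) ^ d) ^ k"
proof -
  let ?S = "{1..n::nat}"
  have finS: "finite ?S" by simp
  define C where "C = conj_class n \<sigma>"
  define C' where "C' = conj_class n \<sigma>'"
  have Cc: "C = {s. s permutes ?S \<and> (\<forall>j. num_cycles n s j = num_cycles n \<sigma> j)}"
    using conj_class_char[OF assms(1)] C_def by simp
  have Cc': "C' = {s. s permutes ?S \<and> (\<forall>j. num_cycles n s j = num_cycles n \<sigma>' j)}"
    using conj_class_char[OF assms(2)] C'_def by simp
  have finC: "finite C" using finite_permutations[OF finS] Cc by (simp add: Collect_mono_iff rev_finite_subset)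
  have finC': "finite C'" using finite_permutations[OF finS] Cc' by (simp add: Collect_mono_iff rev_finite_subset)
  have "\<sigma>' \<in> C'" using Cc' assms(2) by simp
  then have C'pos: "card C' > 0" using finC' card_gt_0_iff by blast
  have d2: "2 \<le> d" using assms(4) .
  have kd_le: "k * d \<le> c 1" using assms(7) by simp

  have Fx: "card {z\<in>?S. s z = z} = c 1" if "s \<in> C" for s
  proof -
    have sp: "s permutes ?S" and ns: "num_cycles n s 1 = num_cycles n \<sigma> 1" using that Cc by auto
    have "permutation s" using sp finS permutation_permutes by blast
    then have "card {z\<in>?S. s z = z} = num_cycles n s 1"
      unfolding num_cycles_Og using card_Og_one[OF _ finS] by simp
    then show ?thesis using ns assms(3)[of 1] by simp
  qed

  define LS where "LS s = {xs. length xs = k * d \<and> distinct xs \<and> set xs \<subseteq> {z\<in>?S. s z = z}}" for s :: "nat \<Rightarrow> nat"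
  define P where "P = \<Prod>{c 1 - k * d + 1 .. c 1}"
  have LScard: "card (LS s) = P" if "s \<in> C" for s
    unfolding LS_def P_def using card_lists_distinct_length_eq[of "{z\<in>?S. s z = z}" "k * d"] Fx[OF that] kd_le
    by simp
  have LSfin: "finite (LS s)" for s
  proof -
    have "LS s \<subseteq> {xs. set xs \<subseteq> {z\<in>?S. s z = z} \<and> length xs = k * d}" unfolding LS_def by auto
    moreover have "finite {xs. set xs \<subseteq> {z\<in>?S. s z = z} \<and> length xs = k * d}"
      by (rule finite_lists_length_eq) simp
    ultimately show ?thesis using finite_subset by blast
  qed
  define D where "D = Sigma C LS"
  have cardD: "card D = card C * P"
  proof -
    have "card D = (\<Sum>s\<in>C. card (LS s))" unfolding D_def using finC LSfin by simp
    also have "\<dots> = (\<Sum>s\<in>C. P)" using LScard by (rule sum.cong[OF refl])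
    finally show ?thesis by simp
  qed

  define U where "U \<tau> = {z\<in>?S. card (orbit \<tau> z) = d}" for \<tau> :: "nat \<Rightarrow> nat"
  define H where "H \<tau> = {hs. set hs \<subseteq> U \<tau> \<and> length hs = k}" for \<tau> :: "nat \<Rightarrow> nat"
  define G where "G = (\<lambda>(s :: nat \<Rightarrow> nat, xs :: nat list). (s \<circ> rho d xs, map (\<lambda>b. xs ! (d * b)) [0..<k]))"

  have Ufin: "finite (U \<tau>)" for \<tau> unfolding U_def by simp
  have Hcard: "card (H \<tau>) = (d * (c d + k)) ^ k" if "\<tau> \<in> C'" for \<tau>
  proof -
    have tp: "\<tau> permutes ?S" and nt: "num_cycles n \<tau> d = num_cycles n \<sigma>' d" using that Cc' by auto
    have "card (U \<tau>) = d * num_cycles n \<tau> d" unfolding U_def num_cycles_Og using U_card[OF tp finS] .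
    then have "card (U \<tau>) = d * (c d + k)" using nt assms(9) by simp
    then show ?thesis unfolding H_def using card_lists_length_eq[OF Ufin] by simp
  qed
  have Hfin: "finite (H \<tau>)" for \<tau> unfolding H_def using finite_lists_length_eq[OF Ufin] by simp

  have inD: "s \<in> C \<and> length xs = k * d \<and> distinct xs \<and> set xs \<subseteq> {z\<in>?S. s z = z}" if "(s, xs) \<in> D" for s xs
    using that unfolding D_def LS_def by simp
  have loc: "blkset n d k s xs" if "(s, xs) \<in> D" for s xs
    using inD[OF that] d2 Cc by unfold_locales auto

  have GD: "G ` D \<subseteq> Sigma C' H"
  proof
    fix y assume "y \<in> G ` D"
    then obtain s xs where sx: "(s, xs) \<in> D" and y: "y = G (s, xs)" by auto
    interpret B: blkset n d k s xs using loc[OF sx] .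
    have sC: "s \<in> C" using inD[OF sx] by simp
    have ns: "num_cycles n s j = num_cycles n \<sigma> j" for j using sC Cc by simp
    have tau_eq: "s \<circ> rho d xs = B.tau" using B.tau_def by simp
    have "B.tau \<in> C'"
    proof -
      have "num_cycles n B.tau j = num_cycles n \<sigma>' j" for j
      proof -
        consider "j = 0" | "j = 1" | "j = d" | "j \<noteq> 0" "j \<noteq> 1" "j \<noteq> d" by blast
        then show ?thesis
        proof cases
          case 1
          have "permutation \<sigma>'" using assms(2) permutation_permutes by blast
          then show ?thesis unfolding num_cycles_Og using 1 Og_zero[OF B.tau_perm] Og_zero[of \<sigma>'] by simp
        next
          case 2
          have "num_cycles n B.tau j = num_cycles n s 1 - k * d"
            unfolding num_cycles_Og 2 using B.card_Og_1 by simp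
          then show ?thesis using ns[of 1] assms(3)[of 1] assms(8) 2 by simp
        next
          case 3
          have "num_cycles n B.tau j = num_cycles n s d + k"
            unfolding num_cycles_Og 3 using B.card_Og_d by simp
          then show ?thesis using ns[of d] assms(3)[of d] assms(9) 3 d2 by simp
        next
          case 4
          have "num_cycles n B.tau j = num_cycles n s j"
            unfolding num_cycles_Og using B.Og_other 4 by simp
          then show ?thesis using ns[of j] assms(3)[of j] assms(10)[of j] 4 by simp
        qed
      qed
      then show ?thesis using Cc' B.tau_permutes by simp
    qed
    moreover have "map (\<lambda>b. xs ! (d * b)) [0..<k] \<in> H B.tau"
    proof -
      have "xs ! (d * b) \<in> U B.tau" if b: "b < k" for b
      proof -
        have i: "d * b < k * d" using idx_lt[OF b, of 0 d] B.dpos by simp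
        then have "card (orbit B.tau (xs ! (d * b))) = d" using B.orbit_nth_card by simp
        moreover have "xs ! (d * b) \<in> ?S" using B.xsS nth_mem i B.len by simp
        ultimately show ?thesis unfolding U_def by simp
      qed
      then show ?thesis unfolding H_def by auto
    qed
    ultimately show "y \<in> Sigma C' H" using y tau_eq unfolding G_def by simp
  qed

  have Ginj: "inj_on G D"
  proof (rule inj_onI)
    fix a a' assume a: "a \<in> D" and a': "a' \<in> D" and e: "G a = G a'"
    obtain s xs where sx: "a = (s, xs)" by (cases a)
    obtain s' xs' where sx': "a' = (s', xs')" by (cases a')
    have D1: "(s, xs) \<in> D" using a sx by simp
    have D2: "(s', xs') \<in> D" using a' sx' by simp
    interpret B: blkset n d k s xs using loc[OF D1] .
    interpret B': blkset n d k s' xs' using loc[OF D2] .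
    have te: "B.tau = B'.tau" using e sx sx' B.tau_def B'.tau_def unfolding G_def by simp
    have he: "map (\<lambda>b. xs ! (d * b)) [0..<k] = map (\<lambda>b. xs' ! (d * b)) [0..<k]"
      using e sx sx' unfolding G_def by simp
    have hq: "xs ! (d * q) = xs' ! (d * q)" if "q < k" for q
      using he that by (simp add: map_eq_conv)
    have xe: "xs = xs'"
    proof (rule nth_equalityI)
      show "length xs = length xs'" using B.len B'.len by simp
      fix i assume "i < length xs"
      then have i: "i < k * d" using B.len by simp
      define q where "q = i div d"
      have q: "q < k" using div_lt[OF i] q_def by simp
      have dq: "d * q < k * d" using idx_lt[OF q, of 0 d] B.dpos by simp
      have dqd: "(d * q) div d = q" "(d * q) mod d = 0" using B.dpos by simp_all
      have "(B.tau ^^ (i mod d)) (xs ! (d * q)) = xs ! i"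
        using B.tau_pow_nth[OF dq, of "i mod d"] dqd q_def B.dpos by simp
      moreover have "(B'.tau ^^ (i mod d)) (xs' ! (d * q)) = xs' ! i"
        using B'.tau_pow_nth[OF dq, of "i mod d"] dqd q_def B.dpos by simp
      ultimately show "xs ! i = xs' ! i" using te hq[OF q] by simp
    qed
    have se: "s = s'"
    proof
      fix z
      show "s z = s' z"
      proof (cases "z \<in> set xs")
        case True
        then show ?thesis using B.sfix B'.sfix xe by simp
      next
        case False
        then show ?thesis using B.tau_out B'.tau_out xe te by metis
      qed
    qed
    show "a = a'" using sx sx' xe se by simp
  qed

  have cardSig: "card (Sigma C' H) = card C' * (d * (c d + k)) ^ k"
  proof -
    have "card (Sigma C' H) = (\<Sum>\<tau>\<in>C'. card (H \<tau>))" using finC' Hfin by simp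
    also have "\<dots> = (\<Sum>\<tau>\<in>C'. (d * (c d + k)) ^ k)" using Hcard by (rule sum.cong[OF refl])
    finally show ?thesis by simp
  qed
  have finSig: "finite (Sigma C' H)" using finC' Hfin by simp
  have main_nat: "card C * P \<le> card C' * (d * (c d + k)) ^ k"
    using card_inj_on_le[OF Ginj GD finSig] cardD cardSig by simp

  have Pge: "(k * d) ^ (k * d) \<le> P"
  proof -
    have "(\<Prod>i\<in>{c 1 - k * d + 1 .. c 1}. k * d) \<le> P"
      unfolding P_def by (rule prod_mono) (use assms(7) in auto)
    moreover have "card {c 1 - k * d + 1 .. c 1} = k * d" using kd_le by simp
    ultimately show ?thesis by simp
  qed

  have nbound: "d * (c d + k) \<le> n"
  proof -
    have sp: "\<sigma> permutes ?S" using assms(1) .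
    define F where "F = {z\<in>?S. \<sigma> z = z}"
    have "permutation \<sigma>" using sp finS permutation_permutes by blast
    then have cF: "card F = c 1"
      unfolding F_def using card_Og_one[OF _ finS] assms(3)[of 1]
      unfolding num_cycles_Og by simp
    have cU: "card (U \<sigma>) = d * c d"
      unfolding U_def using U_card[OF sp finS, of d] assms(3)[of d] d2 unfolding num_cycles_Og by simp
    have disj: "F \<inter> U \<sigma> = {}"
    proof (rule ccontr)
      assume "F \<inter> U \<sigma> \<noteq> {}"
      then obtain z where "\<sigma> z = z" "card (orbit \<sigma> z) = d" unfolding F_def U_def by blast
      then show False using orbit_eq_singleton_iff[of \<sigma> z] d2 by simp
    qed
    have "F \<union> U \<sigma> \<subseteq> ?S" unfolding F_def U_def by auto
    then have "card (F \<union> U \<sigma>) \<le> n" using card_mono[OF finS] by fastforce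
    moreover have "card (F \<union> U \<sigma>) = c 1 + d * c d"
      using card_Un_disjoint[OF _ _ disj] cF cU Ufin unfolding F_def by simp
    ultimately have "c 1 + d * c d \<le> n" by simp
    moreover have "d * (c d + k) \<le> c 1 + d * c d" using assms(7) by (simp add: algebra_simps)
    ultimately show ?thesis by simp
  qed

  define Q where "Q = real ((d * (c d + k)) ^ k)"
  define M where "M = real ((k * d) ^ (k * d))"
  have Mpos: "M > 0" unfolding M_def using assms(4) assms(6) by simp
  have PM: "M \<le> real P" unfolding M_def using Pge by linarith
  have Ppos: "real P > 0" using Mpos PM by simp
  have mainr: "real (card C) * real P \<le> real (card C') * Q"
    unfolding Q_def using main_nat by (metis of_nat_le_iff of_nat_mult)
  have "real (card C) / real (card C') \<le> Q / real P"
    using mainr Ppos C'pos by (simp add: divide_le_eq field_simps)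
  also have "\<dots> \<le> Q / M"
    using PM Mpos unfolding Q_def by (simp add: frac_le)
  also have "Q / M = real (c d + k) ^ k * real d ^ k / real (k * d) ^ (k * d)"
  proof -
    have "Q = real (c d + k) ^ k * real d ^ k"
      unfolding Q_def of_nat_power of_nat_mult power_mult_distrib by (rule mult.commute)
    moreover have "M = real (k * d) ^ (k * d)" unfolding M_def of_nat_power by (rule refl)
    ultimately show ?thesis by simp
  qed
  finally have ineq1: "real (card C) / real (card C') \<le> real (c d + k) ^ k * real d ^ k / real (k * d) ^ (k * d)" .

  have "real (c d + k) ^ k * real d ^ k / real (k * d) ^ (k * d) = (real (d * (c d + k)) / real (k * d) ^ d) ^ k"
  proof -
    have e1: "real (k * d) ^ (k * d) = (real (k * d) ^ d) ^ k" by (metis power_mult mult.commute)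
    have e2: "real (d * (c d + k)) ^ k = real (c d + k) ^ k * real d ^ k"
      unfolding of_nat_mult power_mult_distrib by (rule mult.commute)
    show ?thesis unfolding power_divide e1 e2 by (rule refl)
  qed
  also have "\<dots> \<le> (real n / real (k * d) ^ d) ^ k"
  proof (rule power_mono)
    have "real (d * (c d + k)) \<le> real n" using nbound by linarith
    moreover have "real (k * d) ^ d > 0" using assms(4) assms(6) by simp
    ultimately show "real (d * (c d + k)) / real (k * d) ^ d \<le> real n / real (k * d) ^ d"
      by (simp add: divide_right_mono)
    show "0 \<le> real (d * (c d + k)) / real (k * d) ^ d" by simp
  qed
  finally have ineq2: "real (c d + k) ^ k * real d ^ k / real (k * d) ^ (k * d) \<le> (real n / real (k * d) ^ d) ^ k" .
  show ?thesis using ineq1 ineq2 unfolding C_def C'_def by (rule conjI)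
qed

end
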